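(* Let $X$ be a compact metric countable space and $f:X\to X$ a continuous function such that every accumulation point of $X$ is a fixed point of $f$. For every accumulation point $a$ of $X$, the following are equivalent: (1) there is $p\in\mathbb N^*$ such that $f^p$ is discontinuous at $a$; (2) there are a periodic point $b\in X\setminus\{a\}$ and a sequence $(a_n)_{n\in\mathbb N}$ in $X$ such that $a_n\to a$ and $b\in\overline{\mathcal O_f(a_n)}$ for all $n\in\mathbb N$; (3) $f^p$ is discontinuous at $a$ for every $p\in\mathbb N^*$.
   Context: $\mathbb N^*$ denotes the set of free ultrafilters on $\mathbb N$. For $p\in\mathbb N^*$ and a sequence $(x_n)$ in $X$, $x=p\text{-}\lim_{n\to\infty}x_n$ means that for every neighborhood $V$ of $x$, $\{n\in\mathbb N: x_n\in V\}\in p$. The $p$-iterate of $f$ is the function $f^p:X\to X$, $f^p(x)=p\text{-}\lim_{n\to\infty}f^n(x)$. The orbit of $x$ is $\mathcal O_f(x)=\{f^n(x):n\in\mathbb N\}$. A point $x$ is periodic if $f^n(x)=x$ for some $n\ge1$. An accumulation point of $X$ is a non-isolated point. *)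

theory Defs
  imports "HOL-Analysis.Analysis"
begin

text \<open>A free ultrafilter on the natural numbers (an element of N*), represented as a
  filter in Isabelle's sense: proper, ultra, and containing every cofinite set.\<close>
definition free_ultrafilter :: "nat filter \<Rightarrow> bool" where
  "free_ultrafilter p \<longleftrightarrow>
     p \<noteq> bot \<and>
     (\<forall>A. eventually (\<lambda>n. n \<in> A) p \<or> eventually (\<lambda>n. n \<notin> A) p) \<and>
     p \<le> cofinite"

definition p_iterate :: "nat filter \<Rightarrow> ('a::t2_space \<Rightarrow> 'a) \<Rightarrow> 'a \<Rightarrow> 'a" where
  "p_iterate p f x = Lim p (\<lambda>n. (f ^^ n) x)"

definition orbit :: "('a \<Rightarrow> 'a) \<Rightarrow> 'a \<Rightarrow> 'a set" where
  "orbit f x = {(f ^^ n) x | n. True}"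

definition periodic_point :: "('a \<Rightarrow> 'a) \<Rightarrow> 'a \<Rightarrow> bool" where
  "periodic_point f x \<longleftrightarrow> (\<exists>n\<ge>1. (f ^^ n) x = x)"

end

theory Submission
  imports Defs
begin

lemma funpow_comp_apply: "(f^^a) ((f^^b) x) = (f^^(a+b)) x"
  by (simp add: funpow_add)

lemma funpow_fix: "f a = a \<Longrightarrow> (f^^n) a = a"
  by (induction n) auto

lemma orbit_fix: "f a = a \<Longrightarrow> orbit f a = {a}"
  unfolding orbit_def using funpow_fix[of f a] by auto

lemma iter_orbit: "(f^^n) x \<in> orbit f x"
  unfolding orbit_def by auto

lemma orbit_trans:
  assumes "y \<in> orbit f x" shows "orbit f y \<subseteq> orbit f x"
proof
  fix z assume "z \<in> orbit f y"
  then obtain n where n: "z = (f^^n) y" unfolding orbit_def by auto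
  obtain k where k: "y = (f^^k) x" using assms unfolding orbit_def by auto
  have "z = (f^^(n+k)) x" using n k funpow_comp_apply[where f=f and a=n and b=k and x=x] by simp
  then show "z \<in> orbit f x" using iter_orbit by metis
qed

lemma periodic_mult: "(f^^m) b = b \<Longrightarrow> (f^^(q*m)) b = b"
proof (induction q)
  case 0 then show ?case by simp
next
  case (Suc q)
  have "(f^^(Suc q * m)) b = (f^^m) ((f^^(q*m)) b)"
    using funpow_comp_apply[where f=f and a=m and b="q*m" and x=b] by (simp add: add.commute)
  then show ?case using Suc by simp
qed

lemma periodic_finite:
  assumes "periodic_point f b" shows "finite (orbit f b)"
proof -
  obtain m where m: "m \<ge> 1" "(f^^m) b = b" using assms unfolding periodic_point_def by auto
  have "(f^^n) b \<in> (\<lambda>k. (f^^k) b) ` {..<m}" for n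
  proof -
    have "(f^^n) b = (f^^(n mod m)) ((f^^((n div m)*m)) b)"
      using funpow_comp_apply[where f=f and a="n mod m" and b="(n div m)*m" and x=b] by simp
    also have "\<dots> = (f^^(n mod m)) b" using periodic_mult[OF m(2)] by simp
    finally show ?thesis using m(1) by auto
  qed
  then have "orbit f b \<subseteq> (\<lambda>k. (f^^k) b) ` {..<m}" unfolding orbit_def by auto
  then show ?thesis by (rule finite_subset) simp
qed

lemma periodic_back:
  assumes "periodic_point f b" "c \<in> orbit f b" shows "b \<in> orbit f c"
proof -
  obtain m where m: "m \<ge> 1" "(f^^m) b = b" using assms unfolding periodic_point_def by auto
  obtain k where k: "c = (f^^k) b" using assms unfolding orbit_def by auto
  have "(k+1)*1 \<le> (k+1)*m" using m(1) by (rule mult_le_mono2)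
  then have le: "k \<le> (k+1)*m" by simp
  have "(f^^((k+1)*m - k)) c = (f^^((k+1)*m - k + k)) b"
    unfolding k by (rule funpow_comp_apply)
  also have "\<dots> = (f^^((k+1)*m)) b" using le by (simp only: le_add_diff_inverse2)
  also have "\<dots> = b" by (rule periodic_mult[OF m(2)])
  finally show ?thesis using iter_orbit by metis
qed

lemma good_radius:
  assumes "countable X" "0 < d" shows "\<exists>r. 0 < r \<and> r < d \<and> r \<notin> dist c ` X"
proof -
  have "countable (dist c ` X)" using assms(1) by simp
  moreover have "uncountable {0<..<d}" using assms(2) by (simp add: uncountable_open_interval)
  ultimately have "\<not> {0<..<d} \<subseteq> dist c ` X" using countable_subset by blast
  then show ?thesis by auto
qed

lemma fu_nbot: "free_ultrafilter p \<Longrightarrow> p \<noteq> bot"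
  unfolding free_ultrafilter_def by blast

lemma fu_ev_seq: "free_ultrafilter p \<Longrightarrow> \<forall>n\<ge>N. P n \<Longrightarrow> eventually P p"
  unfolding free_ultrafilter_def le_filter_def cofinite_eq_sequentially eventually_sequentially
  by blast

lemma fu_infinite:
  assumes p: "free_ultrafilter p" and ev: "eventually (\<lambda>n. n \<in> A) p"
  shows "infinite A"
proof
  assume "finite A"
  then have "eventually (\<lambda>n. n \<notin> A) cofinite" by (simp add: eventually_cofinite)
  then have "eventually (\<lambda>n. n \<notin> A) p" using p unfolding free_ultrafilter_def le_filter_def by blast
  then have "eventually (\<lambda>n. False) p" using ev by eventually_elim auto
  then show False using fu_nbot[OF p] by (simp add: eventually_False)
qed

lemma ex_free_ultrafilter: "\<exists>p::nat filter. free_ultrafilter p"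
proof -
  let ?F = "cofinite :: nat filter"
  have F: "?F \<noteq> bot" by (simp add: cofinite_eq_sequentially)
  let ?X = "{G. G \<noteq> bot \<and> G \<le> ?F}"
  let ?R = "{(b, a). a \<noteq> bot \<and> a \<le> b \<and> b \<le> ?F}"
  have bot_notin_R: "c \<in> Chains ?R \<Longrightarrow> bot \<notin> c" for c
    by (auto simp: Chains_def)
  have [simp]: "Field ?R = ?X"
    by (auto simp: Field_def bot_unique)
  have "\<exists>m\<in>Field ?R. \<forall>a\<in>Field ?R. (m, a) \<in> ?R \<longrightarrow> a = m" (is "\<exists>m\<in>?A. ?B m")
  proof (rule Zorns_po_lemma)
    show "Partial_order ?R"
      by (auto simp: partial_order_on_def preorder_on_def
          antisym_def refl_on_def trans_def Field_def bot_unique)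
    show "\<exists>u\<in>Field ?R. \<forall>a\<in>C. (a, u) \<in> ?R" if C: "C \<in> Chains ?R" for C
    proof (simp, intro exI conjI ballI)
      have Inf_C: "Inf C \<noteq> bot" "Inf C \<le> ?F" if "C \<noteq> {}"
      proof -
        from C that have "Inf C = bot \<longleftrightarrow> (\<exists>x\<in>C. x = bot)"
          unfolding trivial_limit_def by (intro eventually_Inf_base) (auto simp: Chains_def)
        with C show "Inf C \<noteq> bot"
          by (simp add: bot_notin_R)
        from that obtain x where "x \<in> C" by auto
        with C show "Inf C \<le> ?F"
          by (auto intro!: Inf_lower2[of x] simp: Chains_def)
      qed
      then have [simp]: "inf ?F (Inf C) = (if C = {} then ?F else Inf C)"
        using C by (auto simp add: inf_absorb2)
      from C show "inf ?F (Inf C) \<noteq> bot"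
        by (simp add: F Inf_C)
      from C show "inf ?F (Inf C) \<le> ?F"
        by (simp add: Chains_def Inf_C F)
      with C show "inf ?F (Inf C) \<le> x" "x \<le> ?F" if "x \<in> C" for x
        using that  by (auto intro: Inf_lower simp: Chains_def)
    qed
  qed
  then obtain U where U: "U \<in> ?A" "?B U" ..
  then have U1: "U \<noteq> bot" "U \<le> ?F" by auto
  have max: "G = U" if "G \<noteq> bot" "G \<le> U" for G
    using U that U1 by auto
  have ultra: "\<forall>A. eventually (\<lambda>n. n\<in>A) U \<or> eventually (\<lambda>n. n \<notin> A) U"
  proof
    fix A show "eventually (\<lambda>n. n\<in>A) U \<or> eventually (\<lambda>n. n \<notin> A) U"
    proof (rule disjCI)
      assume "\<not> eventually (\<lambda>n. n \<notin> A) U"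
      then have "inf U (principal A) \<noteq> bot"
        by (simp add: eventually_False[symmetric] eventually_inf_principal)
      then have "inf U (principal A) = U" using max by simp
      moreover have "eventually (\<lambda>n. n \<in> A) (inf U (principal A))"
        by (simp add: eventually_inf_principal)
      ultimately show "eventually (\<lambda>n. n \<in> A) U" by simp
    qed
  qed
  show ?thesis unfolding free_ultrafilter_def using U1 ultra by blast
qed

locale cdyn =
  fixes X :: "'a::metric_space set" and f :: "'a \<Rightarrow> 'a"
  assumes cpt: "compact X" and cnt: "countable X" and inv: "f ` X \<subseteq> X"
    and cont: "continuous_on X f"
    and fixlim: "\<And>x. x \<in> X \<Longrightarrow> x islimpt X \<Longrightarrow> f x = x"
begin

lemma iter_in: "x \<in> X \<Longrightarrow> (f^^n) x \<in> X"
  by (induction n) (use inv in auto)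

lemma orbit_subset: "x \<in> X \<Longrightarrow> orbit f x \<subseteq> X"
  unfolding orbit_def using iter_in by auto

lemma cross_finite:
  assumes r: "r \<notin> dist c ` X" and Z: "Z \<subseteq> X"
    and cr: "\<And>z. z \<in> Z \<Longrightarrow> (dist c z < r) \<noteq> (dist c (f z) < r)"
  shows "finite Z"
proof (rule ccontr)
  assume "infinite Z"
  then obtain w where w: "w \<in> X" "w islimpt Z" using cpt Z compact_eq_Bolzano_Weierstrass by blast
  have "w islimpt X" using w(2) Z islimpt_subset by blast
  then have fw: "f w = w" using fixlim w(1) by blast
  have ne: "dist c w \<noteq> r" using r w(1) by auto
  define \<rho> where "\<rho> = \<bar>dist c w - r\<bar>"
  have \<rho>: "\<rho> > 0" using ne unfolding \<rho>_def by auto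
  have "continuous (at w within X) f" using cont w(1) continuous_on_eq_continuous_within by blast
  then obtain \<delta> where \<delta>: "\<delta> > 0" "\<And>x'. x' \<in> X \<Longrightarrow> dist x' w < \<delta> \<Longrightarrow> dist (f x') (f w) < \<rho>"
    unfolding continuous_within_eps_delta using \<rho> by blast
  have "min \<delta> \<rho> > 0" using \<delta>(1) \<rho> by simp
  then obtain z where z: "z \<in> Z" "dist z w < min \<delta> \<rho>"
    using w(2) unfolding islimpt_approachable by blast
  have zX: "z \<in> X" using z Z by auto
  have d1: "dist z w < \<rho>" "dist (f z) w < \<rho>" using z \<delta>(2)[OF zX] fw by auto
  have t: "dist c z \<le> dist c w + dist z w" "dist c w \<le> dist c z + dist w z"
    "dist c (f z) \<le> dist c w + dist (f z) w" "dist c w \<le> dist c (f z) + dist w (f z)"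
    by (rule dist_triangle2)+
  have t2: "dist w z = dist z w" "dist w (f z) = dist (f z) w" by (rule dist_commute)+
  show False
  proof (cases "dist c w < r")
    case True
    then have "\<rho> = r - dist c w" unfolding \<rho>_def by simp
    then have "dist c z < r" "dist c (f z) < r" using t t2 d1 by linarith+
    then show False using cr[OF z(1)] by simp
  next
    case False
    then have "\<rho> = dist c w - r" unfolding \<rho>_def using ne by simp
    then have "\<not> dist c z < r" "\<not> dist c (f z) < r" using t t2 d1 by linarith+
    then show False using cr[OF z(1)] by simp
  qed
qed

lemma not_inj_ij:
  assumes "\<not> inj (\<lambda>n. (f^^n) x)"
  obtains i j where "i < j" "(f^^i) x = (f^^j) x"
proof -
  obtain i j where "i \<noteq> j" "(f^^i) x = (f^^j) x" using assms unfolding inj_on_def by blast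
  then show ?thesis using that by (metis linorder_neqE_nat)
qed

lemma not_inj_finite:
  assumes "\<not> inj (\<lambda>n. (f^^n) x)" shows "finite (orbit f x)"
proof -
  obtain i j where ij: "i < j" "(f^^i) x = (f^^j) x" using not_inj_ij[OF assms] by blast
  have "(f^^n) x \<in> (\<lambda>k. (f^^k) x) ` {..<j}" for n
  proof (induction n rule: less_induct)
    case (less n)
    show ?case
    proof (cases "n < j")
      case True then show ?thesis by auto
    next
      case False
      have "(f^^n) x = (f^^(n-j)) ((f^^j) x)" using False funpow_comp_apply[where f=f and a="n-j" and b=j and x=x] by simp
      also have "\<dots> = (f^^(n-j)) ((f^^i) x)" using ij by simp
      also have "\<dots> = (f^^(n-j+i)) x" by (simp add: funpow_comp_apply)
      finally have "(f^^n) x = (f^^(n-j+i)) x" .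
      moreover have "n-j+i < n" using False ij by auto
      ultimately show ?thesis using less by simp
    qed
  qed
  then have "orbit f x \<subseteq> (\<lambda>k. (f^^k) x) ` {..<j}" unfolding orbit_def by auto
  then show ?thesis by (rule finite_subset) simp
qed

lemma eventually_side:
  assumes x: "x \<in> X" and inj: "inj (\<lambda>n. (f^^n) x)" and r: "r \<notin> dist c ` X"
  shows "(\<exists>N. \<forall>n\<ge>N. dist c ((f^^n) x) < r) \<or> (\<exists>N. \<forall>n\<ge>N. \<not> dist c ((f^^n) x) < r)"
proof -
  define B where "B = {n. (dist c ((f^^n) x) < r) \<noteq> (dist c ((f^^Suc n) x) < r)}"
  have "finite ((\<lambda>n. (f^^n) x) ` B)"
    by (rule cross_finite[OF r]) (auto simp: B_def iter_in[OF x])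
  then have "finite B" using inj by (meson finite_imageD inj_on_subset subset_UNIV)
  then obtain N where N: "\<forall>n\<in>B. n < N" by (meson finite_nat_set_iff_bounded)
  have *: "(dist c ((f^^n) x) < r) = (dist c ((f^^N) x) < r)" if "N \<le> n" for n
    using that
  proof (induction n rule: dec_induct)
    case base then show ?case by simp
  next
    case (step m) then have "m \<notin> B" using N by auto
    then show ?case using step.IH unfolding B_def by auto
  qed
  show ?thesis
  proof (cases "dist c ((f^^N) x) < r")
    case True then show ?thesis using * by blast
  next
    case False then show ?thesis using * by blast
  qed
qed

lemma plim:
  assumes p: "free_ultrafilter p" and x: "x \<in> X"
  shows "((\<lambda>n. (f^^n) x) \<longlongrightarrow> p_iterate p f x) p" "p_iterate p f x \<in> X"
proof -
  let ?g = "\<lambda>n. (f^^n) x"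
  define F where "F = filtermap ?g p"
  have Fnb: "F \<noteq> bot" using fu_nbot[OF p] by (simp add: F_def filtermap_bot_iff)
  have evX: "eventually (\<lambda>z. z \<in> X) F" unfolding F_def eventually_filtermap using iter_in[OF x] by simp
  have "\<exists>y\<in>X. inf (nhds y) F \<noteq> bot"
    using cpt[unfolded compact_filter, rule_format, OF Fnb evX] .
  then obtain y where y: "y \<in> X" "inf (nhds y) F \<noteq> bot" by (elim bexE) simp
  have lim: "(?g \<longlongrightarrow> y) p"
  proof (rule topological_tendstoI)
    fix S assume S: "open S" "y \<in> S"
    show "eventually (\<lambda>n. ?g n \<in> S) p"
    proof (rule ccontr)
      assume nt: "\<not> eventually (\<lambda>n. ?g n \<in> S) p"
      have "\<forall>A. eventually (\<lambda>n. n \<in> A) p \<or> eventually (\<lambda>n. n \<notin> A) p"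
        using p unfolding free_ultrafilter_def by (elim conjE)
      then have "eventually (\<lambda>n. n \<in> {n. ?g n \<in> S}) p \<or> eventually (\<lambda>n. n \<notin> {n. ?g n \<in> S}) p"
        by (rule allE)
      then have "eventually (\<lambda>n. n \<notin> {n. ?g n \<in> S}) p" using nt by simp
      then have e1: "eventually (\<lambda>z. z \<notin> S) F" unfolding F_def eventually_filtermap by simp
      have e2: "eventually (\<lambda>z. z \<in> S) (nhds y)" using eventually_nhds_in_open[OF S] .
      have e1': "eventually (\<lambda>z. z \<notin> S) (inf (nhds y) F)" using filter_leD[OF inf_le2 e1] .
      have e2': "eventually (\<lambda>z. z \<in> S) (inf (nhds y) F)" using filter_leD[OF inf_le1 e2] .
      have "eventually (\<lambda>z. False) (inf (nhds y) F)" using e1' e2' by eventually_elim auto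
      then show False using y(2) by (simp add: eventually_False)
    qed
  qed
  have "p_iterate p f x = y" unfolding p_iterate_def using tendsto_Lim[OF fu_nbot[OF p] lim] .
  then show "(?g \<longlongrightarrow> p_iterate p f x) p" "p_iterate p f x \<in> X" using lim y by auto
qed

lemma plim_closed:
  assumes p: "free_ultrafilter p" and x: "x \<in> X" and S: "closed S"
    and ev: "eventually (\<lambda>n. (f^^n) x \<in> S) p"
  shows "p_iterate p f x \<in> S"
  using Lim_in_closed_set[OF S ev fu_nbot[OF p] plim(1)[OF p x]] .

lemma plim_fix: "free_ultrafilter p \<Longrightarrow> f a = a \<Longrightarrow> p_iterate p f a = a"
  unfolding p_iterate_def using funpow_fix[of f a] tendsto_Lim[OF fu_nbot tendsto_const] by simp

lemma plim_in_closure: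
  assumes p: "free_ultrafilter p" and x: "x \<in> X"
  shows "p_iterate p f x \<in> closure (orbit f x)"
proof -
  have "\<forall>n\<ge>0. (f^^n) x \<in> closure (orbit f x)"
  proof (intro allI impI)
    fix n :: nat show "(f^^n) x \<in> closure (orbit f x)"
      by (rule subsetD[OF closure_subset iter_orbit])
  qed
  then have "eventually (\<lambda>n. (f^^n) x \<in> closure (orbit f x)) p" by (rule fu_ev_seq[OF p])
  then show ?thesis by (rule plim_closed[OF p x closed_closure])
qed

lemma plim_periodic:
  assumes p: "free_ultrafilter p" and x: "x \<in> X"
  shows "periodic_point f (p_iterate p f x)"
proof (cases "inj (\<lambda>n. (f^^n) x)")
  case True
  let ?y = "p_iterate p f x"
  have yX: "?y \<in> X" and lim: "((\<lambda>n. (f^^n) x) \<longlongrightarrow> ?y) p" using plim[OF p x] by auto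
  have "?y islimpt X"
  proof (unfold islimpt_def, intro allI impI)
    fix T assume T: "?y \<in> T" "open T"
    then have ev: "eventually (\<lambda>n. (f^^n) x \<in> T) p" using topological_tendstoD[OF lim T(2) T(1)] by simp
    then have "infinite {n. (f^^n) x \<in> T}" using fu_infinite[OF p, of "{n. (f^^n) x \<in> T}"] by simp
    then have inf: "infinite ((\<lambda>n. (f^^n) x) ` {n. (f^^n) x \<in> T})"
      using True by (simp add: finite_image_iff inj_on_subset)
    have "\<exists>z\<in>(\<lambda>n. (f^^n) x) ` {n. (f^^n) x \<in> T}. z \<noteq> ?y"
    proof (rule ccontr)
      assume "\<not> ?thesis"
      then have "(\<lambda>n. (f^^n) x) ` {n. (f^^n) x \<in> T} \<subseteq> {?y}" by auto
      then show False using inf finite_subset by blast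
    qed
    then show "\<exists>z\<in>X. z \<in> T \<and> z \<noteq> ?y" using iter_in[OF x] by auto
  qed
  then have "f ?y = ?y" using fixlim yX by blast
  then show ?thesis unfolding periodic_point_def by (intro exI[of _ 1]) simp
next
  case False
  obtain i j where ij: "i < j" "(f^^i) x = (f^^j) x" using not_inj_ij[OF False] by blast
  define C where "C = {(f^^k) x | k. i \<le> k}"
  have "C \<subseteq> orbit f x" unfolding C_def orbit_def by auto
  then have "finite C" using not_inj_finite[OF False] finite_subset by blast
  then have "closed C" by (rule finite_imp_closed)
  moreover have "eventually (\<lambda>n. (f^^n) x \<in> C) p"
    by (rule fu_ev_seq[OF p, of i]) (auto simp: C_def)
  ultimately have "p_iterate p f x \<in> C" using plim_closed[OF p x] by blast
  then obtain k where k: "i \<le> k" "p_iterate p f x = (f^^k) x" unfolding C_def by auto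
  have "(f^^(j-i)) ((f^^k) x) = (f^^((k-i)+j)) x"
    using funpow_comp_apply[where f=f and a="j-i" and b=k and x=x] k(1) ij(1) by (simp add: algebra_simps)
  also have "\<dots> = (f^^(k-i)) ((f^^j) x)" by (simp add: funpow_comp_apply)
  also have "\<dots> = (f^^(k-i)) ((f^^i) x)" using ij by simp
  also have "\<dots> = (f^^k) x" using k(1) by (simp add: funpow_comp_apply)
  finally show ?thesis unfolding periodic_point_def using k ij(1)
    by (intro exI[of _ "j-i"]) simp
qed

lemma plim_in_orbit:
  assumes p: "free_ultrafilter p" and x: "x \<in> X" and b: "b \<in> X" "periodic_point f b"
    and bc: "b \<in> closure (orbit f x)"
  shows "p_iterate p f x \<in> orbit f b"
proof (cases "b \<in> orbit f x")
  case True
  then obtain j where j: "b = (f^^j) x" unfolding orbit_def by auto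
  have "\<forall>n\<ge>j. (f^^n) x \<in> orbit f b"
  proof (intro allI impI)
    fix n assume "j \<le> n"
    then have "(f^^n) x = (f^^(n-j)) b" using j funpow_comp_apply[where f=f and a="n-j" and b=j and x=x] by simp
    then show "(f^^n) x \<in> orbit f b" using iter_orbit by metis
  qed
  then show ?thesis
    by (intro plim_closed[OF p x] finite_imp_closed periodic_finite b fu_ev_seq[OF p])
next
  case False
  have bl: "b islimpt orbit f x" using bc False closure_def by auto
  have "b islimpt X" using bl orbit_subset[OF x] islimpt_subset by blast
  then have fb: "f b = b" using fixlim b(1) by blast
  have inj: "inj (\<lambda>n. (f^^n) x)" using bl not_inj_finite islimpt_finite by blast
  show ?thesis
  proof (rule ccontr)
    assume "\<not> ?thesis"
    then have yb: "p_iterate p f x \<noteq> b" using orbit_fix[of f b, OF fb] by simp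
    have yX: "p_iterate p f x \<in> X" using plim[OF p x] by simp
    obtain r where r: "0 < r" "r < dist b (p_iterate p f x)" "r \<notin> dist b ` X"
      using good_radius[OF cnt, of "dist b (p_iterate p f x)" b] yb by auto
    from eventually_side[OF x inj r(3)] show False
    proof
      assume "\<exists>N. \<forall>n\<ge>N. dist b ((f^^n) x) < r"
      then obtain N where N: "\<forall>n\<ge>N. dist b ((f^^n) x) < r" by blast
      have "eventually (\<lambda>n. (f^^n) x \<in> cball b r) p"
        using N by (intro fu_ev_seq[OF p, of N]) auto
      then have "p_iterate p f x \<in> cball b r" using plim_closed[OF p x closed_cball] by blast
      then show False using r(2) by simp
    next
      assume "\<exists>N. \<forall>n\<ge>N. \<not> dist b ((f^^n) x) < r"
      then obtain N where N: "\<forall>n\<ge>N. \<not> dist b ((f^^n) x) < r" by blast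
      have "orbit f x \<subseteq> (\<lambda>n. (f^^n) x) ` {..<N} \<union> (- ball b r)"
      proof
        fix z assume "z \<in> orbit f x"
        then obtain n where n: "z = (f^^n) x" unfolding orbit_def by auto
        show "z \<in> (\<lambda>n. (f^^n) x) ` {..<N} \<union> (- ball b r)"
        proof (cases "n < N")
          case True then show ?thesis using n by auto
        next
          case False then show ?thesis using n N by auto
        qed
      qed
      then have "b islimpt (\<lambda>n. (f^^n) x) ` {..<N} \<union> (- ball b r)" using bl islimpt_subset by blast
      then have "b islimpt (- ball b r)" using islimpt_Un islimpt_finite finite_imageI finite_lessThan by blast
      then have "b \<in> - ball b r" using closed_limpt[of "- ball b r"] open_ball by auto
      then show False using r(1) by simp
    qed
  qed
qed

end

theorem theorem3p5:
  fixes X :: "'a::metric_space set" and f :: "'a \<Rightarrow> 'a" and a :: 'a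
  assumes "compact X" and "countable X"
    and "f ` X \<subseteq> X" and "continuous_on X f"
    and "\<And>x. x \<in> X \<Longrightarrow> x islimpt X \<Longrightarrow> f x = x"
    and "a \<in> X" and "a islimpt X"
  shows "((\<exists>p. free_ultrafilter p \<and> \<not> continuous (at a within X) (p_iterate p f))
          \<longleftrightarrow>
          (\<exists>b s. b \<in> X - {a} \<and> periodic_point f b \<and> (\<forall>n. s n \<in> X) \<and>
                 s \<longlonglongrightarrow> a \<and> (\<forall>n. b \<in> closure (orbit f (s n)))))
       \<and>
         ((\<exists>b s. b \<in> X - {a} \<and> periodic_point f b \<and> (\<forall>n. s n \<in> X) \<and>
                 s \<longlonglongrightarrow> a \<and> (\<forall>n. b \<in> closure (orbit f (s n))))
          \<longleftrightarrow>
          (\<forall>p. free_ultrafilter p \<longrightarrow> \<not> continuous (at a within X) (p_iterate p f)))"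
proof -
  interpret cdyn X f using assms(1-5) by unfold_locales auto
  have aX: "a \<in> X" using assms(6) .
  have fa: "f a = a" using assms(5-7) by blast
  have pa: "periodic_point f a" unfolding periodic_point_def using fa by (intro exI[of _ 1]) simp
  let ?A = "\<exists>p. free_ultrafilter p \<and> \<not> continuous (at a within X) (p_iterate p f)"
  let ?B = "\<exists>b s. b \<in> X - {a} \<and> periodic_point f b \<and> (\<forall>n. s n \<in> X) \<and>
                 s \<longlonglongrightarrow> a \<and> (\<forall>n. b \<in> closure (orbit f (s n)))"
  let ?C = "\<forall>p. free_ultrafilter p \<longrightarrow> \<not> continuous (at a within X) (p_iterate p f)"
  have BC: "?B \<Longrightarrow> ?C"
  proof -
    assume ?B
    then obtain b s where b: "b \<in> X" "b \<noteq> a" "periodic_point f b" and s: "\<forall>n. s n \<in> X" "s \<longlonglongrightarrow> a"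
      and bs: "\<forall>n. b \<in> closure (orbit f (s n))" by blast
    show ?C
    proof (intro allI impI notI)
      fix p assume p: "free_ultrafilter p" and c: "continuous (at a within X) (p_iterate p f)"
      have "(p_iterate p f \<circ> s) \<longlonglongrightarrow> p_iterate p f a"
        using c s unfolding continuous_within_sequentially by blast
      then have lim: "(p_iterate p f \<circ> s) \<longlonglongrightarrow> a" using plim_fix[OF p fa] by simp
      have "\<forall>n. (p_iterate p f \<circ> s) n \<in> orbit f b"
        using plim_in_orbit[OF p _ b(1) b(3)] s(1) bs by simp
      then have ev: "eventually (\<lambda>n. (p_iterate p f \<circ> s) n \<in> orbit f b) sequentially"
        by (rule always_eventually)
      have "a \<in> orbit f b"
        using Lim_in_closed_set[OF finite_imp_closed[OF periodic_finite[OF b(3)]] ev trivial_limit_sequentially lim] .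
      then have "b \<in> orbit f a" using periodic_back[OF b(3)] by blast
      then show False using orbit_fix[of f a, OF fa] b(2) by simp
    qed
  qed
  have CA: "?C \<Longrightarrow> ?A" using ex_free_ultrafilter by blast
  have AB: "?A \<Longrightarrow> ?B"
  proof -
    assume ?A
    then obtain p where p: "free_ultrafilter p" and nc: "\<not> continuous (at a within X) (p_iterate p f)"
      by blast
    let ?g = "p_iterate p f"
    have ga: "?g a = a" using plim_fix[OF p fa] .
    have "\<not> (\<forall>e>0. \<exists>d>0. \<forall>x'\<in>X. dist x' a < d \<longrightarrow> dist (?g x') a < e)"
      using nc unfolding continuous_within_eps_delta ga .
    then obtain e where e1: "e > 0" and e2: "\<forall>d>0. \<not> (\<forall>x'\<in>X. dist x' a < d \<longrightarrow> dist (?g x') a < e)"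
      by auto
    have e: "e > 0" "\<And>d. d > 0 \<Longrightarrow> \<exists>x\<in>X. dist x a < d \<and> \<not> dist (?g x) a < e"
      using e1 e2 by auto
    obtain r where r: "0 < r" "r < e" "r \<notin> dist a ` X" using good_radius[OF cnt e(1)] by blast
    define T where "T = {x\<in>X. dist a x < r \<and> \<not> dist a (?g x) < r}"
    define W where "W = {z\<in>X. dist a z < r \<and> \<not> dist a (f z) < r}"
    have finW: "finite W" by (rule cross_finite[OF r(3)]) (auto simp: W_def)
    have TW: "\<exists>w\<in>W. w \<in> orbit f x" if xT: "x \<in> T" for x
    proof -
      have xX: "x \<in> X" using xT T_def by auto
      have "\<exists>m. dist a ((f^^m) x) < r \<and> \<not> dist a ((f^^Suc m) x) < r"
      proof (rule ccontr)
        assume nm: "\<not> ?thesis"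
        have all: "dist a ((f^^m) x) < r" for m
        proof (induction m)
          case 0 then show ?case using xT T_def by simp
        next
          case (Suc m) then show ?case using nm by blast
        qed
        have "eventually (\<lambda>n. (f^^n) x \<in> cball a r) p"
          using all by (intro fu_ev_seq[OF p, of 0]) (auto intro: less_imp_le)
        then have "?g x \<in> cball a r" using plim_closed[OF p xX closed_cball] by blast
        moreover have "?g x \<in> X" using plim[OF p xX] by simp
        ultimately have gX: "?g x \<in> X" "dist a (?g x) \<le> r" by auto
        have "\<not> dist a (?g x) < r" using xT unfolding T_def by simp
        then have "r = dist a (?g x)" using gX(2) by simp
        then have "r \<in> dist a ` X" using gX(1) by blast
        then show False using r(3) by simp
      qed
      then obtain m where m: "dist a ((f^^m) x) < r" "\<not> dist a ((f^^Suc m) x) < r" by blast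
      have "(f^^m) x \<in> W" using m iter_in[OF xX] unfolding W_def by simp
      moreover have "(f^^m) x \<in> orbit f x" by (rule iter_orbit)
      ultimately show ?thesis by (rule bexI[rotated])
    qed
    define Tw where "Tw w = {x\<in>T. w \<in> orbit f x}" for w
    have sub: "T \<subseteq> (\<Union>w\<in>W. closure (Tw w))"
    proof
      fix x assume xT: "x \<in> T"
      then obtain w where "w \<in> W" "w \<in> orbit f x" using TW by blast
      then have "x \<in> Tw w" "w \<in> W" using xT unfolding Tw_def by auto
      then show "x \<in> (\<Union>w\<in>W. closure (Tw w))" using closure_subset by blast
    qed
    have cl: "closed (\<Union>w\<in>W. closure (Tw w))" using finW by (intro closed_UN) auto
    have "a \<in> closure T" unfolding closure_approachable
    proof (intro allI impI)
      fix \<epsilon> :: real assume "\<epsilon> > 0"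
      then obtain x where x: "x \<in> X" "dist x a < min \<epsilon> r" "\<not> dist (?g x) a < e"
        using e(2)[of "min \<epsilon> r"] r(1) by auto
      have "x \<in> T" unfolding T_def using x r(2) by (auto simp: dist_commute)
      then show "\<exists>y\<in>T. dist y a < \<epsilon>" using x by auto
    qed
    then have "a \<in> (\<Union>w\<in>W. closure (Tw w))" by (rule subsetD[OF closure_minimal[OF sub cl]])
    then obtain w where w: "w \<in> W" "a \<in> closure (Tw w)" by blast
    then obtain s where s: "\<forall>n. s n \<in> Tw w" "s \<longlonglongrightarrow> a" unfolding closure_sequential by blast
    have wX: "w \<in> X" using w W_def by auto
    have sX: "\<forall>n. s n \<in> X" using s unfolding Tw_def T_def by auto
    have bcl: "?g w \<in> closure (orbit f (s n))" for n
    proof -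
      have "w \<in> orbit f (s n)" using s(1) unfolding Tw_def by auto
      then have "orbit f w \<subseteq> orbit f (s n)" by (rule orbit_trans)
      then show ?thesis by (rule subsetD[OF closure_mono plim_in_closure[OF p wX]])
    qed
    have bna: "?g w \<noteq> a"
    proof
      assume "?g w = a"
      then have "a \<in> closure (orbit f (s 0))" using bcl[of 0] by simp
      then have "?g (s 0) \<in> orbit f a" using plim_in_orbit[OF p _ aX pa, of "s 0"] sX by simp
      then have ga0: "?g (s 0) = a" using orbit_fix[of f a, OF fa] by simp
      have "s 0 \<in> T" using s(1) unfolding Tw_def by blast
      then have "\<not> dist a (?g (s 0)) < r" unfolding T_def by blast
      then have "\<not> dist a a < r" by (simp only: ga0 not_False_eq_True)
      then show False using r(1) by simp
    qed
    show ?B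
      by (rule exI[of _ "?g w"], rule exI[of _ s])
        (use plim(2)[OF p wX] bna plim_periodic[OF p wX] sX s(2) bcl in auto)
  qed
  show ?thesis
  proof (intro conjI iffI)
    assume ?A then show ?B by (rule AB)
  next
    assume ?B then show ?A by (rule CA[OF BC])
  next
    assume ?B then show ?C by (rule BC)
  next
    assume ?C then show ?B by (rule AB[OF CA])
  qed
qed

end
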